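(* Let $\lambda>0$ and let $\Sigma\in\mathbb{R}^{d\times d}$ be symmetric positive definite with simple spectrum $\sigma_1>\sigma_2>\cdots>\sigma_d>0$ and associated unit eigenvectors $u_1,\dots,u_d$. Define $\mathcal{R}_{\mathrm{soft},\infty}:\mathbb{R}^d\to\mathbb{R}$ by \[ \mathcal{R}_{\mathrm{soft},\infty}(\mu)=\operatorname{tr}(\Sigma)-2\lambda\,\mu^\top\Sigma^2\mu+\lambda^2(\mu^\top\Sigma\mu)(\mu^\top\Sigma^2\mu). \] Then all critical points of $\mathcal{R}_{\mathrm{soft},\infty}$ are nondegenerate, and \[ \mathrm{crit}(\mathcal{R}_{\mathrm{soft},\infty})=\{0\}\cup\Big\{\pm\tfrac{1}{\sqrt{\lambda\sigma_j}}u_j:\ j=1,\dots,d\Big\}. \] Moreover: (1) $0$ is a strict local maximum; (2) for $j=2,\dots,d$, the points $\pm\frac{1}{\sqrt{\lambda\sigma_j}}u_j$ are strict saddles; (3) the points $\pm\frac{1}{\sqrt{\lambda\sigma_1}}u_1$ are global minimizers of $\mathcal{R}_{\mathrm{soft},\infty}$.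
   Context: $\mathcal{R}_{\mathrm{soft},\infty}(\mu)$ equals $\mathbb{E}\big[\|X-\lambda\Sigma\mu\mu^\top X\|^2\big]$ for $X\sim\mathcal{N}(0,\Sigma)$, the population risk of the infinite-prompt limit of a rank-one softmax attention layer. A critical point is nondegenerate if the Hessian there is invertible; a strict saddle is a critical point whose Hessian has a negative eigenvalue and which is not a local minimum. *)

theory Defs
  imports "HOL-Analysis.Analysis"
begin

definition R_soft_inf :: "real \<Rightarrow> real^'n^'n \<Rightarrow> real^'n \<Rightarrow> real" where
  "R_soft_inf lam S mu =
     trace S - 2 * lam * (mu \<bullet> ((S ** S) *v mu))
     + lam\<^sup>2 * (mu \<bullet> (S *v mu)) * (mu \<bullet> ((S ** S) *v mu))"

definition grad :: "(real^'n \<Rightarrow> real) \<Rightarrow> real^'n \<Rightarrow> real^'n" where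
  "grad f x = (\<chi> i. frechet_derivative f (at x) (axis i 1))"

definition hessian :: "(real^'n \<Rightarrow> real) \<Rightarrow> real^'n \<Rightarrow> real^'n^'n" where
  "hessian f x = matrix (frechet_derivative (grad f) (at x))"

definition critical_point :: "(real^'n \<Rightarrow> real) \<Rightarrow> real^'n \<Rightarrow> bool" where
  "critical_point f x \<longleftrightarrow> f differentiable (at x) \<and> grad f x = 0"

definition nondegenerate_critical_point :: "(real^'n \<Rightarrow> real) \<Rightarrow> real^'n \<Rightarrow> bool" where
  "nondegenerate_critical_point f x \<longleftrightarrow>
     critical_point f x \<and> grad f differentiable (at x) \<and> invertible (hessian f x)"

definition is_eigenvalue :: "real^'n^'n \<Rightarrow> real \<Rightarrow> bool" where
  "is_eigenvalue A c \<longleftrightarrow> (\<exists>v. v \<noteq> 0 \<and> A *v v = c *\<^sub>R v)"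

definition local_min_at :: "(real^'n \<Rightarrow> real) \<Rightarrow> real^'n \<Rightarrow> bool" where
  "local_min_at f x \<longleftrightarrow> (\<exists>e>0. \<forall>y. dist y x < e \<longrightarrow> f x \<le> f y)"

definition strict_local_max_at :: "(real^'n \<Rightarrow> real) \<Rightarrow> real^'n \<Rightarrow> bool" where
  "strict_local_max_at f x \<longleftrightarrow> (\<exists>e>0. \<forall>y. 0 < dist y x \<and> dist y x < e \<longrightarrow> f y < f x)"

definition strict_saddle :: "(real^'n \<Rightarrow> real) \<Rightarrow> real^'n \<Rightarrow> bool" where
  "strict_saddle f x \<longleftrightarrow> critical_point f x \<and> grad f differentiable (at x)
     \<and> (\<exists>c<0. is_eigenvalue (hessian f x) c) \<and> \<not> local_min_at f x"

definition global_minimizer :: "(real^'n \<Rightarrow> real) \<Rightarrow> real^'n \<Rightarrow> bool" where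
  "global_minimizer f x \<longleftrightarrow> (\<forall>y. f x \<le> f y)"

end

theory Submission
  imports Defs
begin


lemma sym_inner:
  fixes M :: "real^'n^'n"
  assumes "transpose M = M"
  shows "x \<bullet> (M *v y) = (M *v x) \<bullet> y"
  by (metis assms dot_lmul_matrix transpose_matrix_vector)

lemma quad_deriv:
  fixes M :: "real^'n^'n"
  assumes "transpose M = M"
  shows "((\<lambda>x. x \<bullet> (M *v x)) has_derivative (\<lambda>h. 2 * ((M *v x) \<bullet> h))) (at x)"
proof -
  have bl: "bounded_linear (\<lambda>x. M *v x)"
    by (simp add: matrix_vector_mul_bounded_linear)
  have "((\<lambda>x. x \<bullet> (M *v x)) has_derivative (\<lambda>h. x \<bullet> (M *v h) + h \<bullet> (M *v x))) (at x)"
    by (rule has_derivative_inner[OF has_derivative_ident bounded_linear.has_derivative[OF bl has_derivative_ident]])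
  moreover have "(\<lambda>h. x \<bullet> (M *v h) + h \<bullet> (M *v x)) = (\<lambda>h. 2 * ((M *v x) \<bullet> h))"
    using sym_inner[OF assms] by (auto simp: inner_commute)
  ultimately show ?thesis by simp
qed

definition qa :: "real^'n^'n \<Rightarrow> real^'n \<Rightarrow> real" where
  "qa S x = x \<bullet> (S *v x)"
definition qb :: "real^'n^'n \<Rightarrow> real^'n \<Rightarrow> real" where
  "qb S x = x \<bullet> (S *v (S *v x))"

definition G :: "real \<Rightarrow> real^'n^'n \<Rightarrow> real^'n \<Rightarrow> real^'n" where
  "G lam S x = (- 4 * lam) *\<^sub>R (S *v (S *v x)) + (2 * lam\<^sup>2 * qb S x) *\<^sub>R (S *v x)
      + (2 * lam\<^sup>2 * qa S x) *\<^sub>R (S *v (S *v x))"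

definition DG :: "real \<Rightarrow> real^'n^'n \<Rightarrow> real^'n \<Rightarrow> real^'n \<Rightarrow> real^'n" where
  "DG lam S x h = (- 4 * lam) *\<^sub>R (S *v (S *v h))
      + (4 * lam\<^sup>2 * ((S *v (S *v x)) \<bullet> h)) *\<^sub>R (S *v x)
      + (2 * lam\<^sup>2 * qb S x) *\<^sub>R (S *v h)
      + (4 * lam\<^sup>2 * ((S *v x) \<bullet> h)) *\<^sub>R (S *v (S *v x))
      + (2 * lam\<^sup>2 * qa S x) *\<^sub>R (S *v (S *v h))"

lemma R_eq: "R_soft_inf lam S x = trace S - 2 * lam * qb S x + lam\<^sup>2 * qa S x * qb S x"
  unfolding R_soft_inf_def qa_def qb_def by (simp add: matrix_vector_mul_assoc)

lemma qa_deriv: "transpose S = S \<Longrightarrow> (qa S has_derivative (\<lambda>h. 2 * ((S *v x) \<bullet> h))) (at x)"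
  unfolding qa_def[abs_def] by (rule quad_deriv)

lemma qb_deriv: "transpose S = S \<Longrightarrow> (qb S has_derivative (\<lambda>h. 2 * ((S *v (S *v x)) \<bullet> h))) (at x)"
proof -
  assume s: "transpose S = S"
  have t: "transpose (S ** S) = S ** S" by (simp add: matrix_transpose_mul s)
  have "qb S = (\<lambda>x. x \<bullet> ((S ** S) *v x))" unfolding qb_def by (simp add: matrix_vector_mul_assoc)
  then show ?thesis using quad_deriv[OF t, of x] by (simp add: matrix_vector_mul_assoc)
qed

lemma R_deriv:
  assumes "transpose S = S"
  shows "(R_soft_inf lam S has_derivative (\<lambda>h. G lam S x \<bullet> h)) (at x)"
proof -
  have e: "R_soft_inf lam S = (\<lambda>x. trace S - 2 * lam * qb S x + lam\<^sup>2 * (qa S x * qb S x))"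
    by (simp add: R_eq[abs_def] mult.assoc)
  have "((\<lambda>x. trace S - 2 * lam * qb S x + lam\<^sup>2 * (qa S x * qb S x)) has_derivative
     (\<lambda>h. 0 - 2 * lam * (2 * ((S *v (S *v x)) \<bullet> h)) + lam\<^sup>2 * (qa S x * (2 * ((S *v (S *v x)) \<bullet> h))
        + (2 * ((S *v x) \<bullet> h)) * qb S x))) (at x)"
    by (intro has_derivative_add has_derivative_diff has_derivative_const has_derivative_mult_right
        has_derivative_mult qa_deriv qb_deriv assms)
  moreover have "(\<lambda>h. 0 - 2 * lam * (2 * ((S *v (S *v x)) \<bullet> h)) + lam\<^sup>2 * (qa S x * (2 * ((S *v (S *v x)) \<bullet> h))
        + (2 * ((S *v x) \<bullet> h)) * qb S x)) = (\<lambda>h. G lam S x \<bullet> h)"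
    by (rule ext) (simp add: G_def inner_add_left algebra_simps)
  ultimately show ?thesis by (simp add: e)
qed

lemma grad_R: "transpose S = S \<Longrightarrow> grad (R_soft_inf lam S) = G lam S"
proof (rule ext)
  fix x assume s: "transpose S = S"
  have "frechet_derivative (R_soft_inf lam S) (at x) = (\<lambda>h. G lam S x \<bullet> h)"
    using R_deriv[OF s] frechet_derivative_at by metis
  then show "grad (R_soft_inf lam S) x = G lam S x"
    unfolding grad_def by (simp add: vec_eq_iff inner_axis)
qed

lemma G_deriv:
  assumes s: "transpose S = S"
  shows "(G lam S has_derivative DG lam S x) (at x)"
proof -
  have bl: "bounded_linear (\<lambda>x. S *v x)"
    by (simp add: matrix_vector_mul_bounded_linear)
  have d1: "((\<lambda>x. S *v x) has_derivative (\<lambda>h. S *v h)) (at x)"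
    by (rule bounded_linear.has_derivative[OF bl has_derivative_ident])
  have d2: "((\<lambda>x. S *v (S *v x)) has_derivative (\<lambda>h. S *v (S *v h))) (at x)"
    by (rule bounded_linear.has_derivative[OF bl d1])
  have "(G lam S has_derivative (\<lambda>h. (- 4 * lam) *\<^sub>R (S *v (S *v h))
      + ((2 * lam\<^sup>2 * qb S x) *\<^sub>R (S *v h) + (2 * lam\<^sup>2 * (2 * ((S *v (S *v x)) \<bullet> h))) *\<^sub>R (S *v x))
      + ((2 * lam\<^sup>2 * qa S x) *\<^sub>R (S *v (S *v h)) + (2 * lam\<^sup>2 * (2 * ((S *v x) \<bullet> h))) *\<^sub>R (S *v (S *v x))))) (at x)"
    unfolding G_def[abs_def]
    by (intro has_derivative_add has_derivative_scaleR_right has_derivative_scaleR has_derivative_mult_right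
        qa_deriv qb_deriv s d1 d2)
  moreover have "(\<lambda>h. (- 4 * lam) *\<^sub>R (S *v (S *v h))
      + ((2 * lam\<^sup>2 * qb S x) *\<^sub>R (S *v h) + (2 * lam\<^sup>2 * (2 * ((S *v (S *v x)) \<bullet> h))) *\<^sub>R (S *v x))
      + ((2 * lam\<^sup>2 * qa S x) *\<^sub>R (S *v (S *v h)) + (2 * lam\<^sup>2 * (2 * ((S *v x) \<bullet> h))) *\<^sub>R (S *v (S *v x))))
     = DG lam S x"
    by (rule ext) (simp add: DG_def algebra_simps)
  ultimately show ?thesis by simp
qed

lemma hessian_R:
  assumes s: "transpose S = S"
  shows "hessian (R_soft_inf lam S) x *v h = DG lam S x h"
proof -
  have fd: "frechet_derivative (G lam S) (at x) = DG lam S x"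
    using G_deriv[OF s] frechet_derivative_at by metis
  have "linear (DG lam S x)"
    using G_deriv[OF s] has_derivative_linear by blast
  then have "Vector_Spaces.linear (*s) (*s) (DG lam S x)"
    by (simp add: linear_matrix_vector_mul_eq)
  then show ?thesis
    unfolding hessian_def grad_R[OF s] fd by (rule matrix_works)
qed




locale spec =
  fixes lam :: real and S :: "real^'n^'n"
    and \<sigma> :: "nat \<Rightarrow> real" and u :: "nat \<Rightarrow> real^'n"
  assumes lam_pos: "lam > 0"
    and sym: "transpose S = S"
    and posdef: "\<forall>x. x \<noteq> 0 \<longrightarrow> x \<bullet> (S *v x) > 0"
    and simple: "\<forall>i\<in>{1..CARD('n)}. \<forall>j\<in>{1..CARD('n)}. i < j \<longrightarrow> \<sigma> j < \<sigma> i"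
    and last_pos: "\<sigma> (CARD('n)) > 0"
    and eig: "\<forall>j\<in>{1..CARD('n)}. S *v u j = \<sigma> j *\<^sub>R u j"
    and unit: "\<forall>j\<in>{1..CARD('n)}. norm (u j) = 1"
begin


lemma uu: "j \<in> {1..CARD('n)} \<Longrightarrow> u j \<bullet> u j = 1"
  using unit by (simp add: dot_square_norm)

lemma Su: "j \<in> {1..CARD('n)} \<Longrightarrow> S *v u j = \<sigma> j *\<^sub>R u j"
  using eig by blast

lemma SSu: "j \<in> {1..CARD('n)} \<Longrightarrow> S *v (S *v u j) = (\<sigma> j)\<^sup>2 *\<^sub>R u j"
  using eig by (simp add: matrix_vector_mult_scaleR power2_eq_square)

lemma u_nz: "j \<in> {1..CARD('n)} \<Longrightarrow> u j \<noteq> 0"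
proof -
  assume j: "j \<in> {1..CARD('n)}"
  then have "norm (u j) = 1" using unit by blast
  then show ?thesis by auto
qed

lemma sig_pos: "j \<in> {1..CARD('n)} \<Longrightarrow> \<sigma> j > 0"
proof -
  assume j: "j \<in> {1..CARD('n)}"
  have "0 < u j \<bullet> (S *v u j)" using posdef u_nz[OF j] by blast
  then show ?thesis using uu[OF j] by (simp add: Su[OF j])
qed

lemma sig_le1: "j \<in> {1..CARD('n)} \<Longrightarrow> \<sigma> j \<le> \<sigma> 1"
  using simple[rule_format, of 1 j] by (cases "j = 1") auto

lemma one_I: "1 \<in> {1..CARD('n)}"
  by simp

lemma orth: "i \<in> {1..CARD('n)} \<Longrightarrow> j \<in> {1..CARD('n)} \<Longrightarrow> i \<noteq> j \<Longrightarrow> u i \<bullet> u j = 0"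
proof -
  assume i: "i \<in> {1..CARD('n)}" and j: "j \<in> {1..CARD('n)}" and ne: "i \<noteq> j"
  have "\<sigma> i \<noteq> \<sigma> j" using simple[rule_format, of i j] simple[rule_format, of j i] i j ne by (cases "i < j") auto
  have "u i \<bullet> (S *v u j) = (S *v u i) \<bullet> u j" by (rule sym_inner[OF sym])
  then have "\<sigma> j * (u i \<bullet> u j) = \<sigma> i * (u i \<bullet> u j)" using i j by (simp add: Su)
  then show ?thesis using \<open>\<sigma> i \<noteq> \<sigma> j\<close> by auto
qed

lemma inner_Sv: "j \<in> {1..CARD('n)} \<Longrightarrow> u j \<bullet> (S *v v) = \<sigma> j * (u j \<bullet> v)"
  by (simp add: sym_inner[OF sym] Su)

lemma inner_SSv: "j \<in> {1..CARD('n)} \<Longrightarrow> u j \<bullet> (S *v (S *v v)) = (\<sigma> j)\<^sup>2 * (u j \<bullet> v)"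
  by (simp add: inner_Sv power2_eq_square)

lemma basis0:
  assumes h: "\<forall>k\<in>{1..CARD('n)}. v \<bullet> u k = 0"
  shows "v = 0"
proof (rule ccontr)
  assume vnz: "v \<noteq> 0"
  let ?U = "insert v (u ` {1..CARD('n)})"
  have inj: "inj_on u {1..CARD('n)}"
    proof (rule inj_onI)
    fix i j assume "i \<in> {1..CARD('n)}" "j \<in> {1..CARD('n)}" "u i = u j"
    then show "i = j" using orth[of i j] uu[of i] by (cases "i = j") auto
  qed
  have vnot: "v \<notin> u ` {1..CARD('n)}"
    using h vnz by auto
  have o2: "u i \<bullet> u j = 0" if "i \<in> {1..CARD('n)}" "j \<in> {1..CARD('n)}" "u i \<noteq> u j" for i j
    using orth that by metis
  have "pairwise orthogonal ?U"
    unfolding pairwise_def orthogonal_def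
  proof (intro ballI impI)
    fix x y assume x: "x \<in> ?U" and y: "y \<in> ?U" and ne: "x \<noteq> y"
    consider "x = v" "y \<in> u ` {1..CARD('n)}" | "y = v" "x \<in> u ` {1..CARD('n)}"
      | "x \<in> u ` {1..CARD('n)}" "y \<in> u ` {1..CARD('n)}" using x y ne by auto
    then show "x \<bullet> y = 0"
    proof cases
      case 1 then show ?thesis using h by auto
    next
      case 2 then show ?thesis using h by (auto simp: inner_commute)
    next
      case 3 then show ?thesis using o2 ne by auto
    qed
  qed
  moreover have "0 \<notin> ?U" using vnz u_nz by auto
  ultimately have "independent ?U" by (rule pairwise_orthogonal_independent)
  then have "card ?U \<le> DIM(real^'n)" using independent_bound by blast
  moreover have "card ?U = CARD('n) + 1"
    using vnot inj by (simp add: card_image)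
  ultimately show False by simp
qed

lemma expand: "v = (\<Sum>k\<in>{1..CARD('n)}. (v \<bullet> u k) *\<^sub>R u k)"
proof -
  have "\<forall>j\<in>{1..CARD('n)}. (v - (\<Sum>k\<in>{1..CARD('n)}. (v \<bullet> u k) *\<^sub>R u k)) \<bullet> u j = 0"
  proof
    fix j assume j: "j \<in> {1..CARD('n)}"
    have "(\<Sum>k\<in>{1..CARD('n)}. (v \<bullet> u k) *\<^sub>R u k) \<bullet> u j = (\<Sum>k\<in>{1..CARD('n)}. (v \<bullet> u k) * (u k \<bullet> u j))"
      by (simp add: inner_sum_left)
    also have "\<dots> = (\<Sum>k\<in>{1..CARD('n)}. if k = j then v \<bullet> u j else 0)"
      using j orth uu by (intro sum.cong) auto
    also have "\<dots> = v \<bullet> u j" using j by simp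
    finally show "(v - (\<Sum>k\<in>{1..CARD('n)}. (v \<bullet> u k) *\<^sub>R u k)) \<bullet> u j = 0"
      by (simp add: inner_diff_left)
  qed
  then have "v - (\<Sum>k\<in>{1..CARD('n)}. (v \<bullet> u k) *\<^sub>R u k) = 0" by (rule basis0)
  then show ?thesis by simp
qed

lemma qa_sum: "qa S v = (\<Sum>k\<in>{1..CARD('n)}. \<sigma> k * (v \<bullet> u k)\<^sup>2)"
proof -
  have "qa S v = (\<Sum>k\<in>{1..CARD('n)}. (v \<bullet> u k) *\<^sub>R u k) \<bullet> (S *v v)"
    unfolding qa_def by (subst expand) simp
  also have "\<dots> = (\<Sum>k\<in>{1..CARD('n)}. \<sigma> k * (v \<bullet> u k)\<^sup>2)"
    by (simp only: inner_sum_left inner_scaleR_left)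
       (intro sum.cong refl, simp add: inner_Sv power2_eq_square inner_commute)
  finally show ?thesis .
qed

lemma qb_sum: "qb S v = (\<Sum>k\<in>{1..CARD('n)}. (\<sigma> k)\<^sup>2 * (v \<bullet> u k)\<^sup>2)"
proof -
  have "qb S v = (\<Sum>k\<in>{1..CARD('n)}. (v \<bullet> u k) *\<^sub>R u k) \<bullet> (S *v (S *v v))"
    unfolding qb_def by (subst expand) simp
  also have "\<dots> = (\<Sum>k\<in>{1..CARD('n)}. (\<sigma> k)\<^sup>2 * (v \<bullet> u k)\<^sup>2)"
    by (simp only: inner_sum_left inner_scaleR_left)
       (intro sum.cong refl, simp add: inner_SSv power2_eq_square inner_commute)
  finally show ?thesis .
qed

lemma qb_le: "qb S v \<le> \<sigma> 1 * qa S v"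
proof -
  have "qb S v = (\<Sum>k\<in>{1..CARD('n)}. (\<sigma> k)\<^sup>2 * (v \<bullet> u k)\<^sup>2)" by (rule qb_sum)
  also have "\<dots> \<le> (\<Sum>k\<in>{1..CARD('n)}. \<sigma> 1 * (\<sigma> k * (v \<bullet> u k)\<^sup>2))"
  proof (rule sum_mono)
    fix k assume k: "k \<in> {1..CARD('n)}"
    have "(\<sigma> k)\<^sup>2 \<le> \<sigma> 1 * \<sigma> k"
      using sig_pos[OF k] sig_le1[OF k] by (simp add: power2_eq_square)
    then show "(\<sigma> k)\<^sup>2 * (v \<bullet> u k)\<^sup>2 \<le> \<sigma> 1 * (\<sigma> k * (v \<bullet> u k)\<^sup>2)"
      by (metis mult.assoc mult_right_mono zero_le_power2)
  qed
  also have "\<dots> = \<sigma> 1 * qa S v" by (simp add: qa_sum sum_distrib_left)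
  finally show ?thesis .
qed

lemma S_inj: "S *v v = 0 \<Longrightarrow> v = 0"
  using posdef by (metis inner_zero_right less_irrefl)

lemma qb_sq: "qb S v = (S *v v) \<bullet> (S *v v)"
  unfolding qb_def by (rule sym_inner[OF sym])

lemma qb_pos: "v \<noteq> 0 \<Longrightarrow> qb S v > 0"
  using S_inj[of v] qb_sq[of v] by (metis inner_gt_zero_iff)

lemma qb_nonneg: "qb S v \<ge> 0"
  by (simp add: qb_sq)

lemma eigvec:
  assumes "v \<noteq> 0" "S *v v = \<kappa> *\<^sub>R v"
  shows "\<exists>j\<in>{1..CARD('n)}. v = (v \<bullet> u j) *\<^sub>R u j"
proof -
  have comp: "\<sigma> k * (u k \<bullet> v) = \<kappa> * (u k \<bullet> v)" if "k \<in> {1..CARD('n)}" for k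
  proof -
    have "u k \<bullet> (S *v v) = \<kappa> * (u k \<bullet> v)" using assms(2) by simp
    then show ?thesis using inner_Sv[OF that, of v] by linarith
  qed
  obtain j where j: "j \<in> {1..CARD('n)}" "v \<bullet> u j \<noteq> 0"
    using basis0 assms(1) by blast
  have kj: "\<sigma> j = \<kappa>" using comp[OF j(1)] j(2) by (simp add: inner_commute)
  have "\<forall>k\<in>{1..CARD('n)}. (v - (v \<bullet> u j) *\<^sub>R u j) \<bullet> u k = 0"
  proof
    fix k assume k: "k \<in> {1..CARD('n)}"
    show "(v - (v \<bullet> u j) *\<^sub>R u j) \<bullet> u k = 0"
    proof (cases "k = j")
      case True then show ?thesis using uu[OF j(1)] by (simp add: inner_diff_left)
    next
      case False
      have "\<sigma> k \<noteq> \<sigma> j" using simple[rule_format, of k j] simple[rule_format, of j k] k j(1) False by (cases "k < j") auto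
      then have "u k \<bullet> v = 0" using comp[OF k] kj by auto
      then show ?thesis using orth[OF j(1) k] False by (simp add: inner_diff_left inner_diff_right inner_commute)
    qed
  qed
  then have "v - (v \<bullet> u j) *\<^sub>R u j = 0" by (rule basis0)
  then show ?thesis using j(1) by auto
qed

end



context spec begin

lemma qa_tu: "j \<in> {1..CARD('n)} \<Longrightarrow> qa S (t *\<^sub>R u j) = t\<^sup>2 * \<sigma> j"
  by (simp add: qa_def matrix_vector_mult_scaleR Su uu power2_eq_square)

lemma qb_tu: "j \<in> {1..CARD('n)} \<Longrightarrow> qb S (t *\<^sub>R u j) = t\<^sup>2 * (\<sigma> j)\<^sup>2"
  by (simp add: qb_def matrix_vector_mult_scaleR SSu uu power2_eq_square)

lemma G_tu: "j \<in> {1..CARD('n)} \<Longrightarrow>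
   G lam S (t *\<^sub>R u j) = (t * (\<sigma> j)\<^sup>2 * (4 * lam\<^sup>2 * t\<^sup>2 * \<sigma> j - 4 * lam)) *\<^sub>R u j"
  by (simp add: G_def qa_tu qb_tu matrix_vector_mult_scaleR Su SSu scaleR_add_left[symmetric]
      algebra_simps power2_eq_square)

lemma tsq: "s \<in> {1, -1} \<Longrightarrow> j \<in> {1..CARD('n)} \<Longrightarrow> lam * (s / sqrt (lam * \<sigma> j))\<^sup>2 * \<sigma> j = 1"
  using sig_pos[of j] lam_pos by (auto simp: power_divide)

lemma G_crit: "s \<in> {1, -1} \<Longrightarrow> j \<in> {1..CARD('n)} \<Longrightarrow> G lam S ((s / sqrt (lam * \<sigma> j)) *\<^sub>R u j) = 0"
proof -
  assume s: "s \<in> {1, -1}" and j: "j \<in> {1..CARD('n)}"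
  define t where "t = s / sqrt (lam * \<sigma> j)"
  have h: "lam * t\<^sup>2 * \<sigma> j = 1" using tsq[OF s j] by (simp add: t_def)
  have "4 * lam\<^sup>2 * t\<^sup>2 * \<sigma> j - 4 * lam = 4 * lam * (lam * t\<^sup>2 * \<sigma> j - 1)"
    by (simp add: algebra_simps power2_eq_square)
  then have "4 * lam\<^sup>2 * t\<^sup>2 * \<sigma> j - 4 * lam = 0" using h by simp
  then show ?thesis using G_tu[OF j, of t] by (simp add: t_def)
qed

lemma G_zero:
  assumes g: "G lam S x = 0" and xnz: "x \<noteq> 0"
  shows "\<exists>s j. x = (s / sqrt (lam * \<sigma> j)) *\<^sub>R u j \<and> s \<in> {1, -1} \<and> j \<in> {1..CARD('n)}"
proof -
  define c where "c = 2 * lam\<^sup>2 * qa S x - 4 * lam"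
  define w where "w = c *\<^sub>R (S *v x) + (2 * lam\<^sup>2 * qb S x) *\<^sub>R x"
  have "S *v w = G lam S x"
    by (simp add: w_def c_def G_def matrix_vector_right_distrib matrix_vector_mult_scaleR algebra_simps)
  then have "w = 0" using g S_inj by simp
  have qbp: "qb S x > 0" using qb_pos[OF xnz] .
  have cnz: "c \<noteq> 0"
  proof
    assume "c = 0"
    then have "(2 * lam\<^sup>2 * qb S x) *\<^sub>R x = 0" using \<open>w = 0\<close> by (simp add: w_def)
    then show False using qbp lam_pos xnz by simp
  qed
  have "S *v x = (- (2 * lam\<^sup>2 * qb S x) / c) *\<^sub>R x"
  proof -
    have "c *\<^sub>R (S *v x) = - ((2 * lam\<^sup>2 * qb S x) *\<^sub>R x)" using \<open>w = 0\<close>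
      by (simp add: w_def add_eq_0_iff2) 
    then have "(1/c) *\<^sub>R (c *\<^sub>R (S *v x)) = (1/c) *\<^sub>R (- ((2 * lam\<^sup>2 * qb S x) *\<^sub>R x))" by simp
    then show ?thesis using cnz by (simp add: divide_inverse)
  qed
  then obtain j where j: "j \<in> {1..CARD('n)}" and xe: "x = (x \<bullet> u j) *\<^sub>R u j"
    using eigvec xnz by blast
  define t where "t = x \<bullet> u j"
  have tnz: "t \<noteq> 0" using xnz xe by (auto simp: t_def)
  have "G lam S (t *\<^sub>R u j) = 0" using g xe by (simp add: t_def)
  then have "(t * (\<sigma> j)\<^sup>2 * (4 * lam\<^sup>2 * t\<^sup>2 * \<sigma> j - 4 * lam)) = 0"
    using G_tu[OF j, of t] u_nz[OF j] by simp
  then have "4 * lam\<^sup>2 * t\<^sup>2 * \<sigma> j - 4 * lam = 0" using tnz sig_pos[OF j] by simp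
  then have "4 * lam * (lam * t\<^sup>2 * \<sigma> j - 1) = 0" by (simp add: algebra_simps power2_eq_square)
  then have "lam * t\<^sup>2 * \<sigma> j = 1" using lam_pos by simp
  then have t2: "t\<^sup>2 = 1 / (lam * \<sigma> j)" using lam_pos sig_pos[OF j] by (simp add: field_simps)
  have at: "\<bar>t\<bar> = 1 / sqrt (lam * \<sigma> j)"
    using t2 by (metis real_sqrt_abs real_sqrt_divide real_sqrt_one)
  show ?thesis
  proof (cases "t > 0")
    case True
    then have "t = 1 / sqrt (lam * \<sigma> j)" using at by simp
    then have "x = (1 / sqrt (lam * \<sigma> j)) *\<^sub>R u j" using xe by (simp add: t_def)
    then show ?thesis using j by blast
  next
    case False
    then have "t = -1 / sqrt (lam * \<sigma> j)" using at tnz by simp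
    then have "x = (-1 / sqrt (lam * \<sigma> j)) *\<^sub>R u j" using xe by (simp add: t_def)
    then show ?thesis using j by blast
  qed
qed


lemma inv_crit:
  fixes H :: "real^'n^'n"
  assumes "\<forall>h. H *v h = 0 \<longrightarrow> h = 0"
  shows "invertible H"
  using assms invertible_left_inverse matrix_left_invertible_ker by blast

lemma DG_zero: "DG lam S 0 h = (- 4 * lam) *\<^sub>R (S *v (S *v h))"
  by (simp add: DG_def qa_def qb_def)

lemma DG_comp:
  assumes j: "j \<in> {1..CARD('n)}" and k: "k \<in> {1..CARD('n)}" and ht: "lam * t\<^sup>2 * \<sigma> j = 1"
  shows "u k \<bullet> DG lam S (t *\<^sub>R u j) h =
    (if k = j then 8 * lam * (\<sigma> j)\<^sup>2 else 2 * lam * \<sigma> k * (\<sigma> j - \<sigma> k)) * (u k \<bullet> h)"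
proof (cases "k = j")
  case True
  have "u k \<bullet> DG lam S (t *\<^sub>R u j) h =
     -4 * lam * (\<sigma> j)\<^sup>2 * (u j \<bullet> h) + 4 * lam\<^sup>2 * (t * (\<sigma> j)\<^sup>2 * (u j \<bullet> h)) * (t * \<sigma> j)
     + 2 * lam\<^sup>2 * (t\<^sup>2 * (\<sigma> j)\<^sup>2) * (\<sigma> j * (u j \<bullet> h))
     + 4 * lam\<^sup>2 * (t * \<sigma> j * (u j \<bullet> h)) * (t * (\<sigma> j)\<^sup>2)
     + 2 * lam\<^sup>2 * (t\<^sup>2 * \<sigma> j) * ((\<sigma> j)\<^sup>2 * (u j \<bullet> h))"
    using True j uu[OF j] by (simp add: DG_def inner_add_right inner_diff_right qa_tu qb_tu inner_Sv inner_SSv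
        matrix_vector_mult_scaleR Su SSu) (simp add: algebra_simps power2_eq_square)
  also have "\<dots> = 8 * lam * (\<sigma> j)\<^sup>2 * (u j \<bullet> h)" using ht by algebra
  finally show ?thesis using True by simp
next
  case False
  have o: "u k \<bullet> u j = 0" using orth[OF k j False] .
  have "u k \<bullet> DG lam S (t *\<^sub>R u j) h =
     -4 * lam * (\<sigma> k)\<^sup>2 * (u k \<bullet> h)
     + 2 * lam\<^sup>2 * (t\<^sup>2 * (\<sigma> j)\<^sup>2) * (\<sigma> k * (u k \<bullet> h))
     + 2 * lam\<^sup>2 * (t\<^sup>2 * \<sigma> j) * ((\<sigma> k)\<^sup>2 * (u k \<bullet> h))"
    using False j k o by (simp add: DG_def inner_add_right inner_diff_right qa_tu qb_tu inner_Sv inner_SSv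
        matrix_vector_mult_scaleR Su SSu) (simp add: algebra_simps power2_eq_square)
  also have "\<dots> = 2 * lam * \<sigma> k * (\<sigma> j - \<sigma> k) * (u k \<bullet> h)" using ht by algebra
  finally show ?thesis using False by simp
qed

lemma nondeg_tu:
  assumes j: "j \<in> {1..CARD('n)}" and ht: "lam * t\<^sup>2 * \<sigma> j = 1"
  shows "invertible (hessian (R_soft_inf lam S) (t *\<^sub>R u j))"
proof (rule inv_crit, intro allI impI)
  fix h assume "hessian (R_soft_inf lam S) (t *\<^sub>R u j) *v h = 0"
  then have z: "DG lam S (t *\<^sub>R u j) h = 0" by (simp add: hessian_R[OF sym])
  have "\<forall>k\<in>{1..CARD('n)}. h \<bullet> u k = 0"
  proof
    fix k assume k: "k \<in> {1..CARD('n)}"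
    have c: "(if k = j then 8 * lam * (\<sigma> j)\<^sup>2 else 2 * lam * \<sigma> k * (\<sigma> j - \<sigma> k)) * (u k \<bullet> h) = 0"
      using DG_comp[OF j k ht, of h] z by simp
    have "(if k = j then 8 * lam * (\<sigma> j)\<^sup>2 else 2 * lam * \<sigma> k * (\<sigma> j - \<sigma> k)) \<noteq> 0"
    proof (cases "k = j")
      case True then show ?thesis using lam_pos sig_pos[OF j] by simp
    next
      case False
      have "\<sigma> k \<noteq> \<sigma> j" using simple[rule_format, of k j] simple[rule_format, of j k] k j False
        by (cases "k < j") auto
      then show ?thesis using False lam_pos sig_pos[OF k] by simp
    qed
    then show "h \<bullet> u k = 0" using c by (simp add: inner_commute)
  qed
  then show "h = 0" by (rule basis0)
qed

lemma nondeg_0: "invertible (hessian (R_soft_inf lam S) 0)"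
proof (rule inv_crit, intro allI impI)
  fix h assume "hessian (R_soft_inf lam S) 0 *v h = 0"
  then have "(- 4 * lam) *\<^sub>R (S *v (S *v h)) = 0" by (simp add: hessian_R[OF sym] DG_zero)
  then have "S *v (S *v h) = 0" using lam_pos by simp
  then show "h = 0" using S_inj by blast
qed

lemma neg_eig:
  assumes j: "j \<in> {1..CARD('n)}" and j1: "j \<noteq> 1" and ht: "lam * t\<^sup>2 * \<sigma> j = 1"
  shows "hessian (R_soft_inf lam S) (t *\<^sub>R u j) *v u 1 = (2 * lam * \<sigma> 1 * (\<sigma> j - \<sigma> 1)) *\<^sub>R u 1"
proof -
  have o: "u j \<bullet> u 1 = 0" using orth[OF j one_I j1] .
  have "DG lam S (t *\<^sub>R u j) (u 1) =
     (-4 * lam * (\<sigma> 1)\<^sup>2 + 2 * lam\<^sup>2 * (t\<^sup>2 * (\<sigma> j)\<^sup>2) * \<sigma> 1 + 2 * lam\<^sup>2 * (t\<^sup>2 * \<sigma> j) * (\<sigma> 1)\<^sup>2) *\<^sub>R u 1"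
    using j o by (simp add: DG_def qa_tu qb_tu matrix_vector_mult_scaleR Su SSu one_I
        scaleR_add_left scaleR_left_diff_distrib power2_eq_square)
  also have "(-4 * lam * (\<sigma> 1)\<^sup>2 + 2 * lam\<^sup>2 * (t\<^sup>2 * (\<sigma> j)\<^sup>2) * \<sigma> 1 + 2 * lam\<^sup>2 * (t\<^sup>2 * \<sigma> j) * (\<sigma> 1)\<^sup>2)
      = 2 * lam * \<sigma> 1 * (\<sigma> j - \<sigma> 1)" using ht by algebra
  finally show ?thesis by (simp add: hessian_R[OF sym])
qed


lemma qa_two:
  assumes i: "i \<in> {1..CARD('n)}" and k: "k \<in> {1..CARD('n)}" and ne: "i \<noteq> k"
  shows "qa S (a *\<^sub>R u i + b *\<^sub>R u k) = a\<^sup>2 * \<sigma> i + b\<^sup>2 * \<sigma> k"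
    and "qb S (a *\<^sub>R u i + b *\<^sub>R u k) = a\<^sup>2 * (\<sigma> i)\<^sup>2 + b\<^sup>2 * (\<sigma> k)\<^sup>2"
proof -
  have o1: "u i \<bullet> u k = 0" using orth[OF i k ne] .
  have o2: "u k \<bullet> u i = 0" using o1 by (simp add: inner_commute)
  show "qa S (a *\<^sub>R u i + b *\<^sub>R u k) = a\<^sup>2 * \<sigma> i + b\<^sup>2 * \<sigma> k"
    using o1 o2 uu[OF i] uu[OF k]
    by (simp add: qa_def matrix_vector_right_distrib matrix_vector_mult_scaleR Su[OF i] Su[OF k]
        inner_add_left inner_add_right) (simp add: power2_eq_square)
  show "qb S (a *\<^sub>R u i + b *\<^sub>R u k) = a\<^sup>2 * (\<sigma> i)\<^sup>2 + b\<^sup>2 * (\<sigma> k)\<^sup>2"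
    using o1 o2 uu[OF i] uu[OF k]
    by (simp add: qb_def matrix_vector_right_distrib matrix_vector_mult_scaleR SSu[OF i] SSu[OF k]
        inner_add_left inner_add_right) (simp add: power2_eq_square)
qed

lemma not_local_min:
  assumes j: "j \<in> {1..CARD('n)}" and j1: "j \<noteq> 1" and ht: "lam * t\<^sup>2 * \<sigma> j = 1"
  shows "\<not> local_min_at (R_soft_inf lam S) (t *\<^sub>R u j)"
proof
  assume "local_min_at (R_soft_inf lam S) (t *\<^sub>R u j)"
  then obtain e where e: "e > 0" and m: "\<forall>y. dist y (t *\<^sub>R u j) < e \<longrightarrow>
      R_soft_inf lam S (t *\<^sub>R u j) \<le> R_soft_inf lam S y"
    unfolding local_min_at_def by blast
  have s1: "\<sigma> 1 > 0" using sig_pos[OF one_I] .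
  have sj: "\<sigma> j < \<sigma> 1" using simple[rule_format, of 1 j] j j1 one_I by auto
  define q where "q = (\<sigma> 1 - \<sigma> j) / (lam * (\<sigma> 1)\<^sup>2)"
  have qp: "q > 0" using sj s1 lam_pos by (simp add: q_def)
  define \<tau> where "\<tau> = min (e / 2) (min 1 q / 2)"
  have tp: "\<tau> > 0" using e qp by (simp add: \<tau>_def)
  have tle: "\<tau> < e" using e by (simp add: \<tau>_def)
  have t1: "\<tau> \<le> 1" by (simp add: \<tau>_def)
  have tq: "\<tau> < q" using qp by (simp add: \<tau>_def)
  have "\<tau>\<^sup>2 \<le> \<tau>" using tp t1 by (simp add: power2_eq_square mult_le_cancel_left1)
  then have t2q: "\<tau>\<^sup>2 < q" using tq by simp
  then have "lam * (\<sigma> 1)\<^sup>2 * \<tau>\<^sup>2 < \<sigma> 1 - \<sigma> j"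
    using s1 lam_pos by (simp add: q_def field_simps)
  then have neg: "(\<sigma> j - \<sigma> 1) + lam * (\<sigma> 1)\<^sup>2 * \<tau>\<^sup>2 < 0" by simp
  define y where "y = t *\<^sub>R u j + \<tau> *\<^sub>R u 1"
  have "dist y (t *\<^sub>R u j) = \<tau>" using tp unit one_I by (simp add: y_def dist_norm)
  then have "R_soft_inf lam S (t *\<^sub>R u j) \<le> R_soft_inf lam S y" using m tle by simp
  moreover have "R_soft_inf lam S y - R_soft_inf lam S (t *\<^sub>R u j)
      = (lam * \<sigma> 1 * \<tau>\<^sup>2) * ((\<sigma> j - \<sigma> 1) + lam * (\<sigma> 1)\<^sup>2 * \<tau>\<^sup>2)"
  proof -
    have "R_soft_inf lam S y - R_soft_inf lam S (t *\<^sub>R u j) =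
       (- 2 * lam * (t\<^sup>2 * (\<sigma> j)\<^sup>2 + \<tau>\<^sup>2 * (\<sigma> 1)\<^sup>2)
         + lam\<^sup>2 * (t\<^sup>2 * \<sigma> j + \<tau>\<^sup>2 * \<sigma> 1) * (t\<^sup>2 * (\<sigma> j)\<^sup>2 + \<tau>\<^sup>2 * (\<sigma> 1)\<^sup>2))
       - (- 2 * lam * (t\<^sup>2 * (\<sigma> j)\<^sup>2) + lam\<^sup>2 * (t\<^sup>2 * \<sigma> j) * (t\<^sup>2 * (\<sigma> j)\<^sup>2))"
      unfolding R_eq y_def qa_two[OF j one_I j1] qa_tu[OF j] qb_tu[OF j] by simp
    also have "\<dots> = (lam * \<sigma> 1 * \<tau>\<^sup>2) * ((\<sigma> j - \<sigma> 1) + lam * (\<sigma> 1)\<^sup>2 * \<tau>\<^sup>2)"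
      using ht by algebra
    finally show ?thesis .
  qed
  moreover have "(lam * \<sigma> 1 * \<tau>\<^sup>2) * ((\<sigma> j - \<sigma> 1) + lam * (\<sigma> 1)\<^sup>2 * \<tau>\<^sup>2) < 0"
    using neg lam_pos s1 tp by (simp add: mult_pos_neg)
  ultimately show False by linarith
qed

lemma R_zero: "R_soft_inf lam S 0 = trace S"
  by (simp add: R_eq qa_def qb_def)

lemma strict_max0: "strict_local_max_at (R_soft_inf lam S) 0"
proof -
  have "continuous (at 0) (qa S)" using qa_deriv[OF sym] has_derivative_continuous by blast
  then obtain d where d: "d > 0" and hd: "\<forall>y. dist y 0 < d \<longrightarrow> dist (qa S y) (qa S 0) < 1 / lam"
    unfolding continuous_at_eps_delta using lam_pos by (meson divide_pos_pos zero_less_one)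
  show ?thesis unfolding strict_local_max_at_def
  proof (intro exI[of _ d] conjI allI impI d)
    fix y :: "real^'n" assume y: "0 < dist y 0 \<and> dist y 0 < d"
    then have ynz: "y \<noteq> 0" by auto
    have "\<bar>qa S y\<bar> < 1 / lam" using hd y by (simp add: qa_def dist_real_def)
    then have "lam * qa S y < 1" using lam_pos by (simp add: field_simps abs_less_iff)
    then have "lam\<^sup>2 * qa S y - 2 * lam < 0" using lam_pos
      by (simp add: power2_eq_square)
    moreover have "qb S y > 0" using qb_pos[OF ynz] .
    ultimately have "qb S y * (lam\<^sup>2 * qa S y - 2 * lam) < 0" by (simp add: mult_pos_neg)
    then show "R_soft_inf lam S y < R_soft_inf lam S 0"
      using R_zero R_eq[of lam S y] by (simp add: algebra_simps)
  qed
qed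

lemma global_min:
  assumes ht: "lam * t\<^sup>2 * \<sigma> 1 = 1"
  shows "global_minimizer (R_soft_inf lam S) (t *\<^sub>R u 1)"
  unfolding global_minimizer_def
proof
  fix y
  have s1: "\<sigma> 1 > 0" using sig_pos[OF one_I] .
  have "R_soft_inf lam S (t *\<^sub>R u 1) = trace S - 2 * lam * (t\<^sup>2 * (\<sigma> 1)\<^sup>2) + lam\<^sup>2 * (t\<^sup>2 * \<sigma> 1) * (t\<^sup>2 * (\<sigma> 1)\<^sup>2)"
    unfolding R_eq qa_tu[OF one_I] qb_tu[OF one_I] by simp
  also have "\<dots> = trace S - \<sigma> 1" using ht by algebra
  finally have r1: "R_soft_inf lam S (t *\<^sub>R u 1) = trace S - \<sigma> 1" .
  let ?a = "qa S y" and ?b = "qb S y"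
  have b0: "?b \<ge> 0" by (rule qb_nonneg)
  have "?b / \<sigma> 1 \<le> ?a" using qb_le[of y] s1 by (simp add: field_simps)
  then have "lam\<^sup>2 * ((?b / \<sigma> 1) * ?b) \<le> lam\<^sup>2 * (?a * ?b)"
    using b0 by (intro mult_left_mono mult_right_mono) auto
  moreover have "lam\<^sup>2 * ((?b / \<sigma> 1) * ?b) - 2 * lam * ?b + \<sigma> 1 = (lam * ?b - \<sigma> 1)\<^sup>2 / \<sigma> 1"
    using s1 by (simp add: field_simps power2_eq_square)
  moreover have "(lam * ?b - \<sigma> 1)\<^sup>2 / \<sigma> 1 \<ge> 0" using s1 by simp
  ultimately have "lam\<^sup>2 * (?a * ?b) - 2 * lam * ?b + \<sigma> 1 \<ge> 0" by linarith
  then show "R_soft_inf lam S (t *\<^sub>R u 1) \<le> R_soft_inf lam S y"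
  proof -
    have "R_soft_inf lam S y = trace S - 2 * lam * ?b + lam\<^sup>2 * ?a * ?b" by (rule R_eq)
    then show ?thesis using r1 \<open>lam\<^sup>2 * (?a * ?b) - 2 * lam * ?b + \<sigma> 1 \<ge> 0\<close>
      by (simp add: algebra_simps)
  qed
qed

end


theorem proposition1:
  fixes lam :: real and S :: "real^'n^'n"
    and \<sigma> :: "nat \<Rightarrow> real" and u :: "nat \<Rightarrow> real^'n"
  assumes lam_pos: "lam > 0"
    and sym: "transpose S = S"
    and posdef: "\<forall>x. x \<noteq> 0 \<longrightarrow> x \<bullet> (S *v x) > 0"
    and simple: "\<forall>i\<in>{1..CARD('n)}. \<forall>j\<in>{1..CARD('n)}. i < j \<longrightarrow> \<sigma> j < \<sigma> i"
    and last_pos: "\<sigma> (CARD('n)) > 0"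
    and eig: "\<forall>j\<in>{1..CARD('n)}. S *v u j = \<sigma> j *\<^sub>R u j"
    and unit: "\<forall>j\<in>{1..CARD('n)}. norm (u j) = 1"
  shows "(\<forall>mu. critical_point (R_soft_inf lam S) mu
              \<longrightarrow> nondegenerate_critical_point (R_soft_inf lam S) mu)
    \<and> {mu. critical_point (R_soft_inf lam S) mu} =
        {0} \<union> {(s / sqrt (lam * \<sigma> j)) *\<^sub>R u j | s j. s \<in> {1, -1} \<and> j \<in> {1..CARD('n)}}
    \<and> strict_local_max_at (R_soft_inf lam S) 0
    \<and> (\<forall>j\<in>{2..CARD('n)}. \<forall>s\<in>{1, -1::real}.
          strict_saddle (R_soft_inf lam S) ((s / sqrt (lam * \<sigma> j)) *\<^sub>R u j))
    \<and> (\<forall>s\<in>{1, -1::real}.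
          global_minimizer (R_soft_inf lam S) ((s / sqrt (lam * \<sigma> 1)) *\<^sub>R u 1))"
proof -
  interpret spec lam S \<sigma> u
    using assms by (simp add: spec_def)
  have gd: "grad (R_soft_inf lam S) differentiable (at x)" for x
    unfolding grad_R[OF sym] using G_deriv[OF sym] differentiable_def by blast
  have crit: "critical_point (R_soft_inf lam S) mu \<longleftrightarrow> G lam S mu = 0" for mu
    unfolding critical_point_def grad_R[OF sym] using R_deriv[OF sym] differentiable_def by blast
  have G0: "G lam S 0 = 0" by (simp add: G_def)
  have cset: "{mu. critical_point (R_soft_inf lam S) mu} =
        {0} \<union> {(s / sqrt (lam * \<sigma> j)) *\<^sub>R u j | s j. s \<in> {1, -1} \<and> j \<in> {1..CARD('n)}}"
  proof (intro set_eqI iffI)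
    fix mu assume "mu \<in> {mu. critical_point (R_soft_inf lam S) mu}"
    then have "G lam S mu = 0" using crit by simp
    then show "mu \<in> {0} \<union> {(s / sqrt (lam * \<sigma> j)) *\<^sub>R u j | s j. s \<in> {1, -1} \<and> j \<in> {1..CARD('n)}}"
      using G_zero by (cases "mu = 0") auto
  next
    fix mu assume "mu \<in> {0} \<union> {(s / sqrt (lam * \<sigma> j)) *\<^sub>R u j | s j. s \<in> {1, -1} \<and> j \<in> {1..CARD('n)}}"
    then have "G lam S mu = 0" using G0 G_crit by auto
    then show "mu \<in> {mu. critical_point (R_soft_inf lam S) mu}" using crit by simp
  qed
  have nd: "\<forall>mu. critical_point (R_soft_inf lam S) mu
              \<longrightarrow> nondegenerate_critical_point (R_soft_inf lam S) mu"
  proof (intro allI impI)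
    fix mu assume c: "critical_point (R_soft_inf lam S) mu"
    then have "mu \<in> {0} \<union> {(s / sqrt (lam * \<sigma> j)) *\<^sub>R u j | s j. s \<in> {1, -1} \<and> j \<in> {1..CARD('n)}}"
      using cset by blast
    then have "invertible (hessian (R_soft_inf lam S) mu)"
    proof
      assume "mu \<in> {0}" then show ?thesis using nondeg_0 by simp
    next
      assume "mu \<in> {(s / sqrt (lam * \<sigma> j)) *\<^sub>R u j | s j. s \<in> {1, -1} \<and> j \<in> {1..CARD('n)}}"
      then obtain s j where m: "mu = (s / sqrt (lam * \<sigma> j)) *\<^sub>R u j" and s: "s \<in> {1, -1}"
        and j: "j \<in> {1..CARD('n)}" by blast
      show ?thesis unfolding m by (rule nondeg_tu[OF j tsq[OF s j]])
    qed
    then show "nondegenerate_critical_point (R_soft_inf lam S) mu"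
      unfolding nondegenerate_critical_point_def using c gd by blast
  qed
  have sad: "\<forall>j\<in>{2..CARD('n)}. \<forall>s\<in>{1, -1::real}.
          strict_saddle (R_soft_inf lam S) ((s / sqrt (lam * \<sigma> j)) *\<^sub>R u j)"
  proof (intro ballI)
    fix j s assume j2: "j \<in> {2..CARD('n)}" and s: "s \<in> {1, -1::real}"
    have j: "j \<in> {1..CARD('n)}" and j1: "j \<noteq> 1" using j2 by auto
    define t where "t = s / sqrt (lam * \<sigma> j)"
    have ht: "lam * t\<^sup>2 * \<sigma> j = 1" unfolding t_def by (rule tsq[OF s j])
    have cp: "critical_point (R_soft_inf lam S) (t *\<^sub>R u j)"
      using crit G_crit[OF s j] by (simp add: t_def)
    have sj: "\<sigma> j < \<sigma> 1" using simple[rule_format, of 1 j] j j1 one_I by auto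
    have neg: "2 * lam * \<sigma> 1 * (\<sigma> j - \<sigma> 1) < 0"
      using sj lam_pos sig_pos[OF one_I] by (simp add: mult_pos_neg)
    have "is_eigenvalue (hessian (R_soft_inf lam S) (t *\<^sub>R u j)) (2 * lam * \<sigma> 1 * (\<sigma> j - \<sigma> 1))"
      unfolding is_eigenvalue_def using neg_eig[OF j j1 ht] u_nz[OF one_I] by blast
    then have "strict_saddle (R_soft_inf lam S) (t *\<^sub>R u j)"
      unfolding strict_saddle_def using cp gd neg not_local_min[OF j j1 ht] by blast
    then show "strict_saddle (R_soft_inf lam S) ((s / sqrt (lam * \<sigma> j)) *\<^sub>R u j)"
      by (simp add: t_def)
  qed
  have gm: "\<forall>s\<in>{1, -1::real}.
          global_minimizer (R_soft_inf lam S) ((s / sqrt (lam * \<sigma> 1)) *\<^sub>R u 1)"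
    using global_min tsq one_I by blast
  show ?thesis using nd cset strict_max0 sad gm by blast
qed

end
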